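(* Let $W$ be a nonempty closed subset of $\mathbb{R}$, $n$ a positive integer, $\alpha_1,\dots,\alpha_n\in\mathrm{Aut}(W)$, and $G=\langle\alpha_1,\dots,\alpha_n\rangle$. Suppose $G$ contains no nonabelian free subsemigroup. If $\mathrm{Fix}_W(\alpha_i)\ne\emptyset$ for all $i$, then $\mathrm{Fix}_W(G)\ne\emptyset$.
   Context: $\mathrm{Aut}(W)$ is the group of order preserving bijections of $W$ (with the order induced from $\mathbb{R}$). For a subset $S$ of a group acting on $W$, $\mathrm{Fix}_W(S)$ is the set of points of $W$ fixed by every element of $S$. *)

theory Defs
  imports "HOL-Analysis.Analysis"
begin

text \<open>Aut(W): order preserving bijections of W \<subseteq> \<real>. To make composition
  well-behaved we represent an element by a function on \<real> which is the
  identity outside W.\<close>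
definition Aut :: "real set \<Rightarrow> (real \<Rightarrow> real) set" where
  "Aut W = {f. bij_betw f W W \<and> mono_on W f \<and> (\<forall>x. x \<notin> W \<longrightarrow> f x = x)}"

definition aut_inv :: "real set \<Rightarrow> (real \<Rightarrow> real) \<Rightarrow> (real \<Rightarrow> real)" where
  "aut_inv W f = (\<lambda>x. if x \<in> W then inv_into W f x else x)"

inductive_set gen_group :: "real set \<Rightarrow> (real \<Rightarrow> real) set \<Rightarrow> (real \<Rightarrow> real) set"
  for W S where
  gen_id: "id \<in> gen_group W S"
| gen_gen: "f \<in> S \<Longrightarrow> f \<in> gen_group W S"
| gen_inv: "f \<in> S \<Longrightarrow> aut_inv W f \<in> gen_group W S"
| gen_comp: "f \<in> gen_group W S \<Longrightarrow> g \<in> gen_group W S \<Longrightarrow> f \<circ> g \<in> gen_group W S"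

fun word_eval :: "(real \<Rightarrow> real) \<Rightarrow> (real \<Rightarrow> real) \<Rightarrow> bool list \<Rightarrow> (real \<Rightarrow> real)" where
  "word_eval f g [] = id"
| "word_eval f g (b # w) = (if b then f else g) \<circ> word_eval f g w"

definition free_semigroup_pair :: "(real \<Rightarrow> real) \<Rightarrow> (real \<Rightarrow> real) \<Rightarrow> bool" where
  "free_semigroup_pair f g \<longleftrightarrow>
     (\<forall>u v. u \<noteq> [] \<longrightarrow> v \<noteq> [] \<longrightarrow> u \<noteq> v \<longrightarrow> word_eval f g u \<noteq> word_eval f g v)"

definition has_nonab_free_subsemigroup :: "(real \<Rightarrow> real) set \<Rightarrow> bool" where
  "has_nonab_free_subsemigroup G \<longleftrightarrow> (\<exists>f\<in>G. \<exists>g\<in>G. free_semigroup_pair f g)"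

definition Fix :: "real set \<Rightarrow> (real \<Rightarrow> real) set \<Rightarrow> real set" where
  "Fix W S = {x \<in> W. \<forall>f\<in>S. f x = x}"

end

theory Submission
  imports Defs
begin

lemma Aut_D:
  assumes "f \<in> Aut W"
  shows "bij_betw f W W" "mono_on W f" "\<And>x. x \<notin> W \<Longrightarrow> f x = x"
  using assms by (auto simp: Aut_def)

lemma Aut_mem: "f \<in> Aut W \<Longrightarrow> x \<in> W \<Longrightarrow> f x \<in> W"
  by (rule bij_betw_apply[OF Aut_D(1)])

lemma Aut_less:
  assumes "f \<in> Aut W" "x \<in> W" "y \<in> W" "x < y"
  shows "f x < f y"
proof -
  have "f x \<le> f y" using Aut_D(2)[OF assms(1)] assms(2-4) by (simp add: mono_onD)
  moreover have "f x \<noteq> f y"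
    using bij_betw_imp_inj_on[OF Aut_D(1)[OF assms(1)]] assms(2-4)
    by (metis inj_onD less_irrefl)
  ultimately show ?thesis by simp
qed

lemma Aut_less_iff:
  assumes "f \<in> Aut W" "x \<in> W" "y \<in> W"
  shows "(f x < f y) = (x < y)" "(f x \<le> f y) = (x \<le> y)"
  using Aut_less[OF assms(1) assms(2,3)] Aut_less[OF assms(1) assms(3,2)]
  by (metis less_le_not_le linorder_le_less_linear order_le_less)+

lemma Aut_inv:
  assumes "f \<in> Aut W"
  shows "aut_inv W f \<in> Aut W"
    and "\<And>y. y \<in> W \<Longrightarrow> f (aut_inv W f y) = y"
    and "\<And>y. y \<in> W \<Longrightarrow> aut_inv W f (f y) = y"
    and "\<And>y. y \<in> W \<Longrightarrow> aut_inv W f y \<in> W"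
proof -
  have b: "bij_betw f W W" using Aut_D(1)[OF assms] .
  have b2: "bij_betw (aut_inv W f) W W"
    using bij_betw_inv_into[OF b] by (rule bij_betw_cong[THEN iffD1, rotated]) (simp add: aut_inv_def)
  show fi: "\<And>y. y \<in> W \<Longrightarrow> f (aut_inv W f y) = y"
    using b by (simp add: aut_inv_def bij_betw_def f_inv_into_f)
  show "\<And>y. y \<in> W \<Longrightarrow> aut_inv W f (f y) = y"
    using b by (simp add: aut_inv_def bij_betw_def bij_betw_apply[OF b])
  show im: "\<And>y. y \<in> W \<Longrightarrow> aut_inv W f y \<in> W"
    by (rule bij_betw_apply[OF b2])
  have "mono_on W (aut_inv W f)"
  proof (rule mono_onI)
    fix r s assume rs: "r \<in> W" "s \<in> W" "r \<le> s"
    show "aut_inv W f r \<le> aut_inv W f s"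
    proof (rule ccontr)
      assume "\<not> ?thesis"
      hence "aut_inv W f s < aut_inv W f r" by simp
      hence "f (aut_inv W f s) < f (aut_inv W f r)" using Aut_less[OF assms] im rs by blast
      thus False using fi rs by simp
    qed
  qed
  thus "aut_inv W f \<in> Aut W" using b2 by (simp add: Aut_def aut_inv_def)
qed

lemma Aut_comp: "f \<in> Aut W \<Longrightarrow> g \<in> Aut W \<Longrightarrow> f \<circ> g \<in> Aut W"
  unfolding Aut_def
  by (auto intro!: bij_betw_trans mono_onI simp: mono_onD bij_betw_apply)

lemma Aut_id: "id \<in> Aut W"
  by (simp add: Aut_def mono_onI)

lemma Aut_inj: assumes "f \<in> Aut W" shows "inj f"
proof (rule injI)
  fix x y assume e: "f x = f y"
  have inj: "inj_on f W" using bij_betw_imp_inj_on[OF Aut_D(1)[OF assms]] .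
  show "x = y"
  proof (cases "x \<in> W"; cases "y \<in> W")
    assume "x \<in> W" "y \<in> W" thus ?thesis using inj e inj_onD by metis
  next
    assume "x \<in> W" "y \<notin> W" thus ?thesis using e Aut_mem[OF assms] Aut_D(3)[OF assms] by metis
  next
    assume "x \<notin> W" "y \<in> W" thus ?thesis using e Aut_mem[OF assms] Aut_D(3)[OF assms] by metis
  next
    assume "x \<notin> W" "y \<notin> W" thus ?thesis using e Aut_D(3)[OF assms] by metis
  qed
qed

lemma inv_sign:
  assumes "f \<in> Aut W" "t \<in> W"
  shows "f t > t \<Longrightarrow> aut_inv W f t < t" "f t < t \<Longrightarrow> aut_inv W f t > t"
  using Aut_less_iff[OF assms(1) Aut_inv(4)[OF assms] assms(2)] Aut_inv(2)[OF assms]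
  by (metis not_less order_le_less)+


lemma Sup_fix:
  assumes "closed W" "f \<in> Aut W" "S \<subseteq> W" "S \<noteq> {}" "bdd_above S"
    and c1: "\<And>s. s \<in> S \<Longrightarrow> \<exists>t\<in>S. s \<le> f t"
    and c2: "\<And>s. s \<in> S \<Longrightarrow> \<exists>t\<in>S. f s \<le> t"
  shows "Sup S \<in> W" "f (Sup S) = Sup S"
proof -
  show L: "Sup S \<in> W" using closed_subset_contains_Sup assms by blast
  have "Sup S \<le> f (Sup S)"
  proof (rule cSup_least[OF assms(4)])
    fix s assume "s \<in> S"
    then obtain t where t: "t \<in> S" "s \<le> f t" using c1 by blast
    have "f t \<le> f (Sup S)" using Aut_less_iff(2)[OF assms(2)] L t assms(3) cSup_upper[OF t(1) assms(5)] by blast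
    thus "s \<le> f (Sup S)" using t by simp
  qed
  moreover have "Sup S \<le> aut_inv W f (Sup S)"
  proof (rule cSup_least[OF assms(4)])
    fix s assume s: "s \<in> S"
    then obtain t where t: "t \<in> S" "f s \<le> t" using c2 by blast
    have "f s \<le> Sup S" using t cSup_upper[OF t(1) assms(5)] by simp
    hence "f s \<le> f (aut_inv W f (Sup S))" using Aut_inv(2)[OF assms(2) L] by simp
    thus "s \<le> aut_inv W f (Sup S)" using Aut_less_iff(2)[OF assms(2)] Aut_inv(4)[OF assms(2) L] s assms(3) by blast
  qed
  hence "f (Sup S) \<le> Sup S"
    using Aut_less_iff(2)[OF assms(2) L Aut_inv(4)[OF assms(2) L]] Aut_inv(2)[OF assms(2) L] by simp
  ultimately show "f (Sup S) = Sup S" by simp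
qed

lemma Inf_fix:
  assumes "closed W" "f \<in> Aut W" "S \<subseteq> W" "S \<noteq> {}" "bdd_below S"
    and c1: "\<And>s. s \<in> S \<Longrightarrow> \<exists>t\<in>S. f t \<le> s"
    and c2: "\<And>s. s \<in> S \<Longrightarrow> \<exists>t\<in>S. t \<le> f s"
  shows "Inf S \<in> W" "f (Inf S) = Inf S"
proof -
  show L: "Inf S \<in> W" using closed_subset_contains_Inf assms by blast
  have "f (Inf S) \<le> Inf S"
  proof (rule cInf_greatest[OF assms(4)])
    fix s assume "s \<in> S"
    then obtain t where t: "t \<in> S" "f t \<le> s" using c1 by blast
    have "f (Inf S) \<le> f t" using Aut_less_iff(2)[OF assms(2)] L t assms(3) cInf_lower[OF t(1) assms(5)] by blast
    thus "f (Inf S) \<le> s" using t by simp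
  qed
  moreover have "aut_inv W f (Inf S) \<le> Inf S"
  proof (rule cInf_greatest[OF assms(4)])
    fix s assume s: "s \<in> S"
    then obtain t where t: "t \<in> S" "t \<le> f s" using c2 by blast
    have "Inf S \<le> f s" using t cInf_lower[OF t(1) assms(5)] by simp
    hence "f (aut_inv W f (Inf S)) \<le> f s" using Aut_inv(2)[OF assms(2) L] by simp
    thus "aut_inv W f (Inf S) \<le> s" using Aut_less_iff(2)[OF assms(2)] Aut_inv(4)[OF assms(2) L] s assms(3) by blast
  qed
  hence "Inf S \<le> f (Inf S)"
    using Aut_less_iff(2)[OF assms(2) Aut_inv(4)[OF assms(2) L] L] Aut_inv(2)[OF assms(2) L] by simp
  ultimately show "f (Inf S) = Inf S" by simp
qed

lemma IVT1:
  assumes "closed W" "f \<in> Aut W" "y \<in> W" "z \<in> W" "y < z" "f y > y" "f z < z"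
  shows "\<exists>L\<in>W. y < L \<and> L < z \<and> f L = L"
proof -
  define S where "S = {t\<in>W. y \<le> t \<and> t \<le> z \<and> t \<le> f t}"
  have yS: "y \<in> S" using assms by (simp add: S_def)
  have bdd: "bdd_above S" unfolding S_def by (rule bdd_aboveI[of _ z]) auto
  have sub: "S \<subseteq> W" by (auto simp: S_def)
  have c1: "\<exists>t\<in>S. s \<le> f t" if "s \<in> S" for s using that by (auto simp: S_def)
  have c2: "\<exists>t\<in>S. f s \<le> t" if s: "s \<in> S" for s
  proof -
    have sW: "s \<in> W" "y \<le> s" "s \<le> z" "s \<le> f s" using s by (auto simp: S_def)
    have "f s \<le> f z" using Aut_less_iff(2)[OF assms(2) sW(1) assms(4)] sW by simp
    moreover have "f s \<le> f (f s)" using Aut_less_iff(2)[OF assms(2) sW(1) Aut_mem[OF assms(2) sW(1)]] sW by simp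
    ultimately have "f s \<in> S" using sW assms(7) Aut_mem[OF assms(2) sW(1)] by (auto simp: S_def)
    thus ?thesis by blast
  qed
  note F = Sup_fix[OF assms(1,2) sub _ bdd c1 c2]
  have "y \<le> Sup S" using cSup_upper[OF yS bdd] .
  moreover have "Sup S \<le> z" using yS by (intro cSup_least) (auto simp: S_def)
  ultimately show ?thesis using F yS assms(6,7)
    by (metis empty_iff order_le_less less_irrefl)
qed

lemma IVT2:
  assumes "closed W" "f \<in> Aut W" "y \<in> W" "z \<in> W" "y < z" "f y < y" "f z > z"
  shows "\<exists>L\<in>W. y < L \<and> L < z \<and> f L = L"
proof -
  have "aut_inv W f y > y" "aut_inv W f z < z" using inv_sign[OF assms(2)] assms by auto
  then obtain L where L: "L \<in> W" "y < L" "L < z" "aut_inv W f L = L"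
    using IVT1[OF assms(1) Aut_inv(1)[OF assms(2)] assms(3-5)] by blast
  hence "f L = L" using Aut_inv(2)[OF assms(2) L(1)] by simp
  thus ?thesis using L by blast
qed

lemma word_maps:
  assumes "F ` (A \<union> B) \<subseteq> A" "G ` (A \<union> B) \<subseteq> B" "x \<in> A \<union> B"
  shows "word_eval F G w x \<in> A \<union> B"
    "word_eval F G (True # w) x \<in> A" "word_eval F G (False # w) x \<in> B"
proof -
  show *: "word_eval F G w x \<in> A \<union> B"
    by (induction w) (use assms in auto)
  show "word_eval F G (True # w) x \<in> A" "word_eval F G (False # w) x \<in> B"
    using * assms by auto
qed

lemma word_not_id:
  assumes "F ` (A \<union> B) \<subseteq> A" "G ` (A \<union> B) \<subseteq> B" "A \<inter> B = {}" "A \<noteq> {}" "B \<noteq> {}"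
    and "w \<noteq> []"
  shows "word_eval F G w \<noteq> id"
proof -
  obtain b w' where w: "w = b # w'" using assms(6) by (cases w) auto
  obtain a0 where a0: "a0 \<in> A" using assms(4) by blast
  obtain b0 where b0: "b0 \<in> B" using assms(5) by blast
  show ?thesis
  proof (cases b)
    case True
    have "word_eval F G w b0 \<in> A" using word_maps(2)[OF assms(1,2), of b0 w'] b0 w True by auto
    thus ?thesis using b0 assms(3) by auto
  next
    case False
    have "word_eval F G w a0 \<in> B" using word_maps(3)[OF assms(1,2), of a0 w'] a0 w False by auto
    thus ?thesis using a0 assms(3) by auto
  qed
qed

lemma comp_cancel: "inj h \<Longrightarrow> h \<circ> p = h \<circ> q \<Longrightarrow> p = q"
  by (rule ext) (metis comp_apply injD)

lemma pingpong:
  assumes "inj F" "inj G" "F ` (A \<union> B) \<subseteq> A" "G ` (A \<union> B) \<subseteq> B" "A \<inter> B = {}" "A \<noteq> {}" "B \<noteq> {}"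
  shows "free_semigroup_pair F G"
proof -
  note NI = word_not_id[OF assms(3-7)]
  have "\<forall>v. u \<noteq> [] \<longrightarrow> v \<noteq> [] \<longrightarrow> u \<noteq> v \<longrightarrow> word_eval F G u \<noteq> word_eval F G v" for u
  proof (induction u)
    case Nil then show ?case by simp
  next
    case (Cons b u)
    show ?case
    proof (intro allI impI)
      fix v assume v: "v \<noteq> []" "b # u \<noteq> v"
      then obtain c v' where vv: "v = c # v'" by (cases v) auto
      show "word_eval F G (b # u) \<noteq> word_eval F G v"
      proof (cases "b = c")
        case False
        obtain a0 where a0: "a0 \<in> A" using assms(6) by blast
        have "word_eval F G (b # u) a0 \<noteq> word_eval F G (c # v') a0"
        proof (cases b)
          case True
          then show ?thesis using False word_maps(2)[OF assms(3,4), of a0 u] word_maps(3)[OF assms(3,4), of a0 v'] a0 assms(5)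
            by auto
        next
          case b: False
          then have "c" using False by simp
          then show ?thesis using b word_maps(3)[OF assms(3,4), of a0 u] word_maps(2)[OF assms(3,4), of a0 v'] a0 assms(5)
            by auto
        qed
        thus ?thesis using vv by metis
      next
        case True
        have uv: "u \<noteq> v'" using v vv True by simp
        show ?thesis
        proof
          assume e: "word_eval F G (b # u) = word_eval F G v"
          have "inj (if b then F else G)" using assms(1,2) by simp
          hence e2: "word_eval F G u = word_eval F G v'"
            using e vv True by (auto intro: comp_cancel)
          show False
          proof (cases "u = []")
            case True
            then have "v' \<noteq> []" using uv by simp
            then show False using NI[of v'] e2 True by (metis word_eval.simps(1))
          next
            case False
            show False
            proof (cases "v' = []")
              case True then show False using NI[of u] e2 False by (metis word_eval.simps(1))
            next
              case False2: False
              then show False using Cons.IH False uv e2 by blast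
            qed
          qed
        qed
      qed
    qed
  qed
  thus ?thesis unfolding free_semigroup_pair_def by blast
qed


lemma gen_group_Aut:
  assumes "S \<subseteq> Aut W" "f \<in> gen_group W S"
  shows "f \<in> Aut W"
  using assms(2)
proof induction
  case gen_id show ?case by (rule Aut_id)
next
  case (gen_gen f) thus ?case using assms(1) by blast
next
  case (gen_inv f) thus ?case using assms(1) Aut_inv(1) by blast
next
  case (gen_comp f g) thus ?case using Aut_comp by blast
qed

lemma gen_group_fix:
  assumes "S \<subseteq> Aut W" "x \<in> W" "\<forall>f\<in>S. f x = x" "f \<in> gen_group W S"
  shows "f x = x"
  using assms(4)
proof induction
  case (gen_inv f)
  hence "f \<in> Aut W" "f x = x" using assms by auto
  thus ?case using Aut_inv(3)[OF _ assms(2)] by metis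
qed (use assms in auto)

lemma funpow_in_group:
  assumes "h \<in> gen_group W S" shows "h ^^ k \<in> gen_group W S"
proof (induction k)
  case 0 show ?case by (simp only: funpow.simps(1)) (rule gen_id)
next
  case (Suc k) show ?case by (simp only: funpow.simps(2)) (rule gen_comp[OF assms Suc.IH])
qed

lemma crossing:
  assumes cW: "closed W" and SA: "S \<subseteq> Aut W"
    and hG: "h \<in> gen_group W S" and gG: "g \<in> gen_group W S"
    and uv: "u \<in> W" "v \<in> W" "u < v"
    and hu: "h u = u" and hlt: "\<And>t. t \<in> W \<Longrightarrow> u < t \<Longrightarrow> t \<le> v \<Longrightarrow> h t < t"
    and gv: "g v = v" and ggt: "\<And>t. t \<in> W \<Longrightarrow> u \<le> t \<Longrightarrow> t < v \<Longrightarrow> g t > t"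
  shows "has_nonab_free_subsemigroup (gen_group W S)"
proof -
  have hA: "h \<in> Aut W" and gA: "g \<in> Aut W" using gen_group_Aut[OF SA] hG gG by auto
  have hkA: "h ^^ k \<in> Aut W" for k using gen_group_Aut[OF SA funpow_in_group[OF hG]] .
  define c where "c = g u"
  have uc: "u < c" using ggt[of u] uv by (simp add: c_def)
  have cv: "c < v" using Aut_less[OF gA uv] gv by (simp add: c_def)
  have cW': "c \<in> W" using Aut_mem[OF gA uv(1)] by (simp add: c_def)
  have hku: "(h ^^ k) u = u" for k by (induction k) (auto simp: hu)
  have "\<exists>N. (h ^^ N) v < c"
  proof (rule ccontr)
    assume "\<not> ?thesis"
    hence ge: "c \<le> (h ^^ k) v" for k by (simp add: not_less)
    have sW: "(h ^^ k) v \<in> W" for k using Aut_mem[OF hkA uv(2)] .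
    have sv: "(h ^^ k) v \<le> v" for k
    proof (induction k)
      case (Suc k)
      have "u < (h ^^ k) v" using ge[of k] uc by simp
      hence "h ((h ^^ k) v) < (h ^^ k) v" using hlt[OF sW _ Suc.IH] by blast
      thus ?case using Suc.IH by simp
    qed simp
    have dec: "h ((h ^^ k) v) < (h ^^ k) v" for k
    proof -
      have "u < (h ^^ k) v" using ge[of k] uc by simp
      thus ?thesis using hlt[OF sW _ sv] by blast
    qed
    define T where "T = range (\<lambda>k. (h ^^ k) v)"
    have TW: "T \<subseteq> W" using sW by (auto simp: T_def)
    have bdd: "bdd_below T" unfolding T_def by (rule bdd_belowI[of _ c]) (use ge in blast)
    have c1: "\<exists>t\<in>T. h t \<le> s" if sT: "s \<in> T" for s
    proof -
      obtain k where "s = (h ^^ k) v" using sT unfolding T_def by blast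
      thus ?thesis using dec[of k] sT by (intro bexI[of _ s]) auto
    qed
    have c2: "\<exists>t\<in>T. t \<le> h s" if sT: "s \<in> T" for s
    proof -
      obtain k where k: "s = (h ^^ k) v" using sT unfolding T_def by blast
      have "h s = (h ^^ Suc k) v" using k by simp
      hence "h s \<in> T" unfolding T_def by (metis rangeI)
      thus ?thesis by blast
    qed
    note F = Inf_fix[OF cW hA TW _ bdd c1 c2]
    have "c \<le> Inf T" unfolding T_def by (rule cINF_greatest) (auto simp: ge)
    moreover have "v \<in> T" unfolding T_def by (rule range_eqI[of _ _ 0]) simp
    hence "Inf T \<le> v" using cInf_lower[OF _ bdd, of v] by blast
    ultimately have "h (Inf T) < Inf T" using hlt[OF F(1)] uc by (auto simp: T_def)
    thus False using F(2) by (simp add: T_def)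
  qed
  then obtain N where N: "(h ^^ N) v < c" by blast
  define A where "A = {t\<in>W. u \<le> t \<and> t \<le> (h ^^ N) v}"
  define B where "B = {t\<in>W. c \<le> t \<and> t \<le> v}"
  have AB: "A \<union> B \<subseteq> {t\<in>W. u \<le> t \<and> t \<le> v}" using N cv uc by (auto simp: A_def B_def)
  have mapA: "(h ^^ N) ` (A \<union> B) \<subseteq> A"
  proof
    fix y assume "y \<in> (h ^^ N) ` (A \<union> B)"
    then obtain t where t: "t \<in> W" "u \<le> t" "t \<le> v" "y = (h ^^ N) t" using AB by blast
    show "y \<in> A" using t Aut_less_iff(2)[OF hkA[of N]] Aut_mem[OF hkA[of N]] uv hku[of N]
      unfolding A_def by (metis (mono_tags, lifting) mem_Collect_eq)
  qed
  have mapB: "g ` (A \<union> B) \<subseteq> B"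
  proof
    fix y assume "y \<in> g ` (A \<union> B)"
    then obtain t where t: "t \<in> W" "u \<le> t" "t \<le> v" "y = g t" using AB by blast
    show "y \<in> B" using t Aut_less_iff(2)[OF gA] Aut_mem[OF gA] uv gv
      unfolding B_def c_def by (metis (mono_tags, lifting) mem_Collect_eq)
  qed
  have "A \<inter> B = {}" using N by (auto simp: A_def B_def)
  moreover have "A \<noteq> {}" using uv hku[of N] Aut_less_iff(2)[OF hkA[of N] uv(1,2)] by (auto simp: A_def)
  moreover have "B \<noteq> {}" using uv cv unfolding B_def by (metis (mono_tags, lifting) empty_iff less_imp_le mem_Collect_eq order_refl)
  ultimately have "free_semigroup_pair (h ^^ N) g"
    using pingpong[OF Aut_inj[OF hkA] Aut_inj[OF gA] mapA mapB] by blast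
  thus ?thesis unfolding has_nonab_free_subsemigroup_def using funpow_in_group[OF hG] gG by blast
qed


lemma crossing2:
  assumes cW: "closed W" and SA: "S \<subseteq> Aut W"
    and f1S: "f1 \<in> S" and f2S: "f2 \<in> S"
    and uv: "u \<in> W" "v \<in> W" "u < v"
    and f1u: "f1 u = u" and f1n: "\<And>t. t \<in> W \<Longrightarrow> u < t \<Longrightarrow> t \<le> v \<Longrightarrow> f1 t \<noteq> t"
    and f2v: "f2 v = v" and f2n: "\<And>t. t \<in> W \<Longrightarrow> u \<le> t \<Longrightarrow> t < v \<Longrightarrow> f2 t \<noteq> t"
  shows "has_nonab_free_subsemigroup (gen_group W S)"
proof -
  have f1A: "f1 \<in> Aut W" and f2A: "f2 \<in> Aut W" using SA f1S f2S by auto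
  obtain h where hG: "h \<in> gen_group W S" and hu: "h u = u"
    and hlt: "\<And>t. t \<in> W \<Longrightarrow> u < t \<Longrightarrow> t \<le> v \<Longrightarrow> h t < t"
  proof (cases "f1 v < v")
    case True
    have "f1 t < t" if t: "t \<in> W" "u < t" "t \<le> v" for t
    proof (rule ccontr)
      assume "\<not> f1 t < t"
      hence gt: "f1 t > t" using f1n[OF t] by simp
      hence "t < v" using True t(3) by (cases "t = v") auto
      then obtain L where "L \<in> W" "t < L" "L < v" "f1 L = L" using IVT1[OF cW f1A t(1) uv(2) _ gt True] by blast
      thus False using f1n[of L] t by auto
    qed
    thus ?thesis using that[of f1] f1S f1u by (auto intro: gen_group.intros)
  next
    case False
    hence vgt: "f1 v > v" using f1n[OF uv(2,3)] by simp
    have "f1 t > t" if t: "t \<in> W" "u < t" "t \<le> v" for t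
    proof (rule ccontr)
      assume "\<not> f1 t > t"
      hence lt: "f1 t < t" using f1n[OF t] by simp
      hence "t < v" using vgt t(3) by (cases "t = v") auto
      then obtain L where "L \<in> W" "t < L" "L < v" "f1 L = L" using IVT2[OF cW f1A t(1) uv(2) _ lt vgt] by blast
      thus False using f1n[of L] t by auto
    qed
    hence "aut_inv W f1 t < t" if t: "t \<in> W" "u < t" "t \<le> v" for t using inv_sign[OF f1A t(1)] t by blast
    moreover have "aut_inv W f1 u = u" using Aut_inv(3)[OF f1A uv(1)] f1u by simp
    ultimately show ?thesis using that[of "aut_inv W f1"] f1S by (auto intro: gen_group.intros)
  qed
  obtain g where gG: "g \<in> gen_group W S" and gv: "g v = v"
    and ggt: "\<And>t. t \<in> W \<Longrightarrow> u \<le> t \<Longrightarrow> t < v \<Longrightarrow> g t > t"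
  proof (cases "f2 u > u")
    case True
    have "f2 t > t" if t: "t \<in> W" "u \<le> t" "t < v" for t
    proof (rule ccontr)
      assume "\<not> f2 t > t"
      hence lt: "f2 t < t" using f2n[OF t] by simp
      hence "u < t" using True t(2) by (cases "t = u") auto
      then obtain L where "L \<in> W" "u < L" "L < t" "f2 L = L" using IVT1[OF cW f2A uv(1) t(1) _ True lt] by blast
      thus False using f2n[of L] t by auto
    qed
    thus ?thesis using that[of f2] f2S f2v by (auto intro: gen_group.intros)
  next
    case False
    hence ult: "f2 u < u" using f2n[OF uv(1) order_refl uv(3)] by simp
    have "f2 t < t" if t: "t \<in> W" "u \<le> t" "t < v" for t
    proof (rule ccontr)
      assume "\<not> f2 t < t"
      hence gt: "f2 t > t" using f2n[OF t] by simp
      hence "u < t" using ult t(2) by (cases "t = u") auto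
      then obtain L where "L \<in> W" "u < L" "L < t" "f2 L = L" using IVT2[OF cW f2A uv(1) t(1) _ ult gt] by blast
      thus False using f2n[of L] t by auto
    qed
    hence "aut_inv W f2 t > t" if t: "t \<in> W" "u \<le> t" "t < v" for t using inv_sign[OF f2A t(1)] t by blast
    moreover have "aut_inv W f2 v = v" using Aut_inv(3)[OF f2A uv(2)] f2v by simp
    ultimately show ?thesis using that[of "aut_inv W f2"] f2S by (auto intro: gen_group.intros)
  qed
  show ?thesis using crossing[OF cW SA hG gG uv hu hlt gv ggt] .
qed


theorem lemma4p4:
  fixes W :: "real set" and n :: nat and \<alpha> :: "nat \<Rightarrow> (real \<Rightarrow> real)"
  assumes "W \<noteq> {}" and "closed W" and "n > 0"
    and "\<And>i. i \<in> {1..n} \<Longrightarrow> \<alpha> i \<in> Aut W"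
    and "\<not> has_nonab_free_subsemigroup (gen_group W (\<alpha> ` {1..n}))"
    and "\<And>i. i \<in> {1..n} \<Longrightarrow> Fix W {\<alpha> i} \<noteq> {}"
  shows "Fix W (gen_group W (\<alpha> ` {1..n})) \<noteq> {}"
proof -
  define S where "S = \<alpha> ` {1..n}"
  have SA: "S \<subseteq> Aut W" using assms(4) by (auto simp: S_def)
  have cW: "closed W" by fact
  have "\<forall>i\<in>{1..n}. \<exists>y. y \<in> W \<and> \<alpha> i y = y" using assms(6) by (auto simp: Fix_def)
  then obtain p where p: "\<And>i. i \<in> {1..n} \<Longrightarrow> p i \<in> W \<and> \<alpha> i (p i) = p i" by metis
  have ne: "{1..n} \<noteq> {}" using assms(3) by simp
  define x where "x = Max (p ` {1..n})"
  have "x \<in> p ` {1..n}" unfolding x_def using ne by (intro Max_in) auto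
  hence xW: "x \<in> W" using p by auto
  have px: "p i \<le> x" if "i \<in> {1..n}" for i unfolding x_def using that by simp
  have "\<exists>y\<in>W. \<forall>i\<in>{1..n}. \<alpha> i y = y"
  proof (cases "\<forall>i\<in>{1..n}. \<alpha> i x = x")
    case True thus ?thesis using xW by blast
  next
    case False
    define I where "I = {i\<in>{1..n}. \<alpha> i x \<noteq> x}"
    have Ine: "I \<noteq> {}" and Ifin: "finite I" using False by (auto simp: I_def)
    define lo where "lo i = Sup {y\<in>W. \<alpha> i y = y \<and> y < x}" for i
    have lo: "lo i \<in> W \<and> \<alpha> i (lo i) = lo i \<and> lo i < x \<and>
        (\<forall>t\<in>W. lo i < t \<and> t \<le> x \<longrightarrow> \<alpha> i t \<noteq> t)" if iI: "i \<in> I" for i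
    proof -
      have i1: "i \<in> {1..n}" "\<alpha> i x \<noteq> x" using iI by (auto simp: I_def)
      define Y where "Y = {y\<in>W. \<alpha> i y = y \<and> y < x}"
      have pY: "p i \<in> Y" using p[OF i1(1)] px[OF i1(1)] i1(2) by (auto simp: Y_def order_le_less)
      have bdd: "bdd_above Y" by (rule bdd_aboveI[of _ x]) (auto simp: Y_def)
      note F = Sup_fix[OF cW assms(4)[OF i1(1)], of Y]
      have F1: "Sup Y \<in> W" "\<alpha> i (Sup Y) = Sup Y" using F pY bdd by (auto simp: Y_def)
      have "Sup Y \<le> x" using pY by (intro cSup_least) (auto simp: Y_def)
      hence "Sup Y < x" using F1 i1(2) by (cases "Sup Y = x") auto
      moreover have "\<alpha> i t \<noteq> t" if t: "t \<in> W" "Sup Y < t" "t \<le> x" for t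
      proof
        assume fx: "\<alpha> i t = t"
        hence "t \<noteq> x" using i1 by auto
        hence "t \<in> Y" using t fx by (auto simp: Y_def)
        thus False using cSup_upper[OF _ bdd, of t] t by simp
      qed
      ultimately show ?thesis using F1 by (auto simp: lo_def Y_def[symmetric])
    qed
    obtain k where kI: "k \<in> I" and kmin: "\<And>i. i \<in> I \<Longrightarrow> lo k \<le> lo i"
    proof -
      have "Min (lo ` I) \<in> lo ` I" using Ine Ifin by simp
      then obtain k where "k \<in> I" "lo k = Min (lo ` I)" by auto
      thus ?thesis using that Ifin by simp
    qed
    define a where "a = lo k"
    have k1: "k \<in> {1..n}" using kI by (auto simp: I_def)
    note la = lo[OF kI, folded a_def]
    have "\<alpha> i a = a" if i1: "i \<in> {1..n}" for i
    proof (rule ccontr)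
      assume nf: "\<alpha> i a \<noteq> a"
      have aW: "a \<in> W" using la by simp
      obtain e where e: "e \<in> W" "a < e" "e \<le> x" "\<alpha> i e = e"
      proof (cases "i \<in> I")
        case True
        have "a \<le> lo i" using kmin[OF True] by (simp add: a_def)
        moreover have "lo i \<noteq> a" using lo[OF True] nf by auto
        ultimately show ?thesis using that[of "lo i"] lo[OF True] by auto
      next
        case False
        thus ?thesis using that[of x] xW la i1 by (auto simp: I_def)
      qed
      define Z where "Z = {y\<in>W. \<alpha> i y = y \<and> a < y}"
      have eZ: "e \<in> Z" using e by (auto simp: Z_def)
      have bdd: "bdd_below Z" by (rule bdd_belowI[of _ a]) (auto simp: Z_def)
      note F = Inf_fix[OF cW assms(4)[OF i1], of Z]
      have F1: "Inf Z \<in> W" "\<alpha> i (Inf Z) = Inf Z" using F eZ bdd by (auto simp: Z_def)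
      have "a \<le> Inf Z" using eZ by (intro cInf_greatest) (auto simp: Z_def)
      hence ad: "a < Inf Z" using F1 nf by (cases "Inf Z = a") auto
      have dx: "Inf Z \<le> x" using cInf_lower[OF eZ bdd] e by simp
      have n2: "\<alpha> i t \<noteq> t" if t: "t \<in> W" "a \<le> t" "t < Inf Z" for t
      proof
        assume fx: "\<alpha> i t = t"
        hence "t \<noteq> a" using nf by auto
        hence "t \<in> Z" using t fx by (auto simp: Z_def)
        thus False using cInf_lower[OF _ bdd, of t] t by simp
      qed
      have n1: "\<alpha> k t \<noteq> t" if t: "t \<in> W" "a < t" "t \<le> Inf Z" for t
        using la t dx by auto
      have "has_nonab_free_subsemigroup (gen_group W S)"
        using crossing2[OF cW SA _ _ aW F1(1) ad, of "\<alpha> k" "\<alpha> i"] k1 i1 la F1 n1 n2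
        unfolding S_def by (auto simp: a_def)
      thus False using assms(5) by (simp add: S_def)
    qed
    thus ?thesis using la by blast
  qed
  then obtain y where y: "y \<in> W" "\<forall>i\<in>{1..n}. \<alpha> i y = y" by blast
  have "\<forall>f\<in>S. f y = y" using y by (auto simp: S_def)
  hence "y \<in> Fix W (gen_group W S)" using gen_group_fix[OF SA y(1)] y(1) by (auto simp: Fix_def)
  thus ?thesis by (auto simp: S_def)
qed

end
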